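(* Let $\mathcal G$ be a Petri game with one system player whose underlying net is finite and bounded. If $\mathcal G$ has a winning, deadlock-avoiding strategy, then Player~0 has a winning strategy in the graph game $\mathit{Graph}(\mathcal G)$.
   Context: Petri nets. A Petri net is a tuple $\mathcal N=(\mathcal P,\mathcal T,\mathcal F,\mathit{In})$ where the set of places $\mathcal P$ and the set of transitions $\mathcal T$ are disjoint, the flow relation $\mathcal F$ is a multiset over $(\mathcal P\times\mathcal T)\cup(\mathcal T\times\mathcal P)$, and the initial marking $\mathit{In}$ is a finite multiset over $\mathcal P$. For a node $x$, the precondition ${}^\bullet x$ is the multiset with ${}^\bullet x(y)=\mathcal F(y,x)$ and the postcondition $x^\bullet$ is the multiset with $x^\bullet(y)=\mathcal F(x,y)$; every transition $t$ must satisfy $0<|{}^\bullet t|<\infty$ and $0<|t^\bullet|<\infty$. A marking is a finite multiset over $\mathcal P$. A transition $t$ is enabled in a marking $M$ if ${}^\bullet t\subseteq M$ (multiset inclusion); firing it yields $M'=M-{}^\bullet t+t^\bullet$, written $M\xrightarrow{t}M'$. A marking is reachable if it is obtained from $\mathit{In}$ by firing a finite sequence of transitions; $\mathcal R(\mathcal N)$ denotes the set of reachable markings. $\mathcal N$ is finite if $\mathcal P\cup\mathcal T$ is finite, $k$-bounded ($k\ge1$) if $M(p)\le k$ for all $M\in\mathcal R(\mathcal N)$ and $p\in\mathcal P$, and bounded if it is $k$-bounded for some $k$. For a function $f$ and a multiset $M$, $f[M]$ is the image multiset $f[M](y)=\sum_{x: f(x)=y}M(x)$. Occurrence nets and branching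 processes. Let $<$ be the transitive closure of $\{(x,y)\mid \mathcal F(x,y)>0\}$ and $\le$ its reflexive-transitive closure; the causal past of a node $x$ is $\lfloor x\rfloor=\{y\mid y\le x\}$, and $\lfloor S\rfloor=\bigcup_{x\in S}\lfloor x\rfloor$. Nodes $x,y$ are in conflict, $x\,\sharp\,y$, if there is a place $p\ne x,y$ and distinct transitions $t_1,t_2\in p^\bullet$ with $t_1\le x$ and $t_2\le y$. Nodes are concurrent if they are neither causally related ($x\le y$ or $y\le x$) nor in conflict. An occurrence net is a net in which pre- and postconditions of transitions are sets, every place has at most one incoming transition, $\mathit{In}=\{p\in\mathcal P\mid {}^\bullet p=\emptyset\}$, $\mathcal F^{-1}$ is well-founded, and no transition is in conflict with itself. A cut is a maximal set of pairwise concurrent places. A homomorphism from $\mathcal N_1$ to $\mathcal N_2$ is a map $\lambda:\mathcal P_1\cup\mathcal T_1\to\mathcal P_2\cup\mathcal T_2$ sending places to places and transitions to transitions with $\lambda[{}^\bullet t]={}^\bullet\lambda(t)$ and $\lambda[t^\bullet]=\lambda(t)^\bullet$ for all $t\in\mathcal T_1$; it is initial if $\lambda[\mathit{In}_1]=\mathit{In}_2$. An initial branching process of $\mathcal N$ is a pair $(\mathcal N^U,\lambda)$ with $\mathcal N^U$ an occurrence net and $\lambda$ an initial homomorphism $\mathcal N^U\to\mathcal N$ such that for all $t_1,t_2\in\mathcal T^U$, ${}^\bullet t_1={}^\bullet t_2$ and $\lambda(t_1)=\lambda(t_2)$ imply $t_1=t_2$. Petri games. A Petri game is $\mathcal G=(\mathcal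 P_S,\mathcal P_E,\mathcal T,\mathcal F,\mathit{In},\mathcal B)$ where $\mathcal P_S$ (system places) and $\mathcal P_E$ (environment places) are disjoint, $\mathcal N=(\mathcal P_S\cup\mathcal P_E,\mathcal T,\mathcal F,\mathit{In})$ is a finite Petri net (the underlying net) and $\mathcal B$ is a set of markings (bad markings). A transition $t$ is purely environmental if ${}^\bullet t\subseteq\mathcal P_E$, otherwise it is a system transition. $\mathcal G$ has one system player if every $M\in\mathcal R(\mathcal N)$ contains exactly one token on system places; that place is denoted $s_M$, and $s_M^\bullet$ is the set of transitions having $s_M$ in their precondition. A winning, deadlock-avoiding strategy for $\mathcal G$ is an initial branching process $(\mathcal N^\sigma,\lambda)$ of $\mathcal N$ such that, with $\mathcal P^\sigma_S=\lambda^{-1}(\mathcal P_S)\cap\mathcal P^\sigma$: (justified refusal) for every set $S$ of pairwise concurrent places of $\mathcal N^\sigma$ and every transition $\mathbf t$ of $\mathcal N$ with $\lambda[S]={}^\bullet\mathbf t$ such that no $t\in\mathcal T^\sigma$ has $\lambda(t)=\mathbf t$ and ${}^\bullet t=S$, there is $s\in S\cap\mathcal P^\sigma_S$ such that $\mathbf t\notin\lambda[s^\bullet]$; (safety) $\lambda[M]\notin\mathcal B$ for all $M\in\mathcal R(\mathcal N^\sigma)$; (determinism) for every $s\in\mathcal P^\sigma_S$ and every $M\in\mathcal R(\mathcal N^\sigma)$ containing $s$, at most one $t\in s^\bullet$ is enabled in $M$; (deadlock avoidance) for every $M\in\mathcal R(\mathcal N^\sigma)$, if some transition of $\mathcal N$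 is enabled in $\lambda[M]$ then some transition of $\mathcal N^\sigma$ is enabled in $M$. Graph games. A graph game $(\mathcal V_0,\mathcal V_1,\mathcal I,\mathcal E,\mathcal X)$ has disjoint vertex sets $\mathcal V_0,\mathcal V_1$ (of Players 0 and 1), initial vertex $\mathcal I$, edge relation $\mathcal E$ and bad vertices $\mathcal X$. A play is a maximal (finite or infinite) sequence $v_0v_1\dots$ with $v_0=\mathcal I$ and $(v_i,v_{i+1})\in\mathcal E$; it is won by Player~0 if no $v_i\in\mathcal X$. A strategy for Player~0 is a vertex-labeled tree whose root is labeled $\mathcal I$, where a node labeled with a $\mathcal V_1$ vertex has one child for each successor vertex and a node labeled with a $\mathcal V_0$ vertex having a successor has exactly one child labeled with one successor; it is winning if all maximal paths are labeled with plays won by Player~0. The game $\mathit{Graph}(\mathcal G)$: $\mathcal V_0=\{(M,\top)\mid M\in\mathcal R(\mathcal N)\}$, $\mathcal V_1=\{(M,c)\mid M\in\mathcal R(\mathcal N),\,c\subseteq s_M^\bullet\}$, $\mathcal I=(\mathit{In},\top)$. Edges: (E1) $(M,\top)\to(M,c)$ for every $c\subseteq s_M^\bullet$; (E2) $(M,c)\to(M',c)$ whenever some purely environmental $\mathbf t$ satisfies $M\xrightarrow{\mathbf t}M'$; (E3) $(M,c)\to(M',\top)$ whenever some system transition $\mathbf t\in c$ satisfies $M\xrightarrow{\mathbf t}M'$. Bad vertices: all $(M,c)\in\mathcal V_1$ such that (X1) $M\in\mathcal B$; or (X2a) two distinct transitions of $c$ are enabled in $M$; or (X2b) some $\mathbf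 t\in c$ is enabled in $M$ and $0<{}^\bullet\mathbf t(p)<M(p)$ for some place $p$; or (X3) some transition is enabled in $M$, every transition enabled in $M$ is a system transition, and no transition enabled in $M$ lies in $c$. *)

theory Defs
  imports Main "HOL-Library.Multiset"
begin

text \<open>A net is given by its place set, transition set, the flow relation (encoded by the
  pre- and postcondition multisets of each transition: F(p,t) = count (pre t) p,
  F(t,p) = count (post t) p) and the initial marking.  Places and transitions live in
  different types, hence are disjoint.\<close>

record ('p, 't) net =
  places :: "'p set"
  trans  :: "'t set"
  pre    :: "'t \<Rightarrow> 'p multiset"
  post   :: "'t \<Rightarrow> 'p multiset"
  init   :: "'p multiset"

definition wf_net :: "('p, 't) net \<Rightarrow> bool" where
  "wf_net N \<longleftrightarrow>
     (\<forall>t \<in> trans N. pre N t \<noteq> {#} \<and> post N t \<noteq> {#}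
        \<and> set_mset (pre N t) \<subseteq> places N \<and> set_mset (post N t) \<subseteq> places N)
     \<and> set_mset (init N) \<subseteq> places N"

definition enabled :: "('p, 't) net \<Rightarrow> 't \<Rightarrow> 'p multiset \<Rightarrow> bool" where
  "enabled N t M \<longleftrightarrow> t \<in> trans N \<and> pre N t \<subseteq># M"

definition fire :: "('p, 't) net \<Rightarrow> 't \<Rightarrow> 'p multiset \<Rightarrow> 'p multiset" where
  "fire N t M = M - pre N t + post N t"

inductive_set reach :: "('p, 't) net \<Rightarrow> 'p multiset set" for N where
  init: "init N \<in> reach N"
| step: "M \<in> reach N \<Longrightarrow> enabled N t M \<Longrightarrow> fire N t M \<in> reach N"

definition finite_net :: "('p, 't) net \<Rightarrow> bool" where
  "finite_net N \<longleftrightarrow> finite (places N) \<and> finite (trans N)"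

definition k_bounded :: "nat \<Rightarrow> ('p, 't) net \<Rightarrow> bool" where
  "k_bounded k N \<longleftrightarrow> (\<forall>M \<in> reach N. \<forall>p \<in> places N. count M p \<le> k)"

definition bounded_net :: "('p, 't) net \<Rightarrow> bool" where
  "bounded_net N \<longleftrightarrow> (\<exists>k \<ge> 1. k_bounded k N)"

text \<open>Nodes of a net: places as Inl, transitions as Inr.\<close>

definition flow_rel :: "('p, 't) net \<Rightarrow> ('p + 't) rel" where
  "flow_rel N =
     {(Inl p, Inr t) | p t. t \<in> trans N \<and> p \<in># pre N t}
   \<union> {(Inr t, Inl p) | p t. t \<in> trans N \<and> p \<in># post N t}"

definition causal_le :: "('p, 't) net \<Rightarrow> ('p + 't) \<Rightarrow> ('p + 't) \<Rightarrow> bool" where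
  "causal_le N x y \<longleftrightarrow> (x, y) \<in> (flow_rel N)\<^sup>*"

definition conflict :: "('p, 't) net \<Rightarrow> ('p + 't) \<Rightarrow> ('p + 't) \<Rightarrow> bool" where
  "conflict N x y \<longleftrightarrow>
     (\<exists>p \<in> places N. \<exists>t1 \<in> trans N. \<exists>t2 \<in> trans N.
        Inl p \<noteq> x \<and> Inl p \<noteq> y \<and> t1 \<noteq> t2 \<and> p \<in># pre N t1 \<and> p \<in># pre N t2
        \<and> causal_le N (Inr t1) x \<and> causal_le N (Inr t2) y)"

definition concurrent :: "('p, 't) net \<Rightarrow> ('p + 't) \<Rightarrow> ('p + 't) \<Rightarrow> bool" where
  "concurrent N x y \<longleftrightarrow> \<not> causal_le N x y \<and> \<not> causal_le N y x \<and> \<not> conflict N x y"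

definition occurrence_net :: "('p, 't) net \<Rightarrow> bool" where
  "occurrence_net N \<longleftrightarrow>
     wf_net N
     \<and> (\<forall>t \<in> trans N. \<forall>p. count (pre N t) p \<le> 1 \<and> count (post N t) p \<le> 1)
     \<and> (\<forall>p \<in> places N. \<forall>t1 \<in> trans N. \<forall>t2 \<in> trans N.
           p \<in># post N t1 \<and> p \<in># post N t2 \<longrightarrow> t1 = t2)
     \<and> (\<forall>p. count (init N) p \<le> 1)
     \<and> set_mset (init N) = {p \<in> places N. \<not> (\<exists>t \<in> trans N. p \<in># post N t)}
     \<and> wf (flow_rel N)
     \<and> (\<forall>t \<in> trans N. \<not> conflict N (Inr t) (Inr t))"

definition homomorphism ::
  "('q, 'u) net \<Rightarrow> ('p, 't) net \<Rightarrow> ('q \<Rightarrow> 'p) \<Rightarrow> ('u \<Rightarrow> 't) \<Rightarrow> bool" where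
  "homomorphism N1 N2 lp lt \<longleftrightarrow>
     lp ` places N1 \<subseteq> places N2 \<and> lt ` trans N1 \<subseteq> trans N2
     \<and> (\<forall>t \<in> trans N1. image_mset lp (pre N1 t) = pre N2 (lt t)
                       \<and> image_mset lp (post N1 t) = post N2 (lt t))"

definition initial_hom ::
  "('q, 'u) net \<Rightarrow> ('p, 't) net \<Rightarrow> ('q \<Rightarrow> 'p) \<Rightarrow> ('u \<Rightarrow> 't) \<Rightarrow> bool" where
  "initial_hom N1 N2 lp lt \<longleftrightarrow>
     homomorphism N1 N2 lp lt \<and> image_mset lp (init N1) = init N2"

definition branching_process ::
  "('p, 't) net \<Rightarrow> ('q, 'u) net \<Rightarrow> ('q \<Rightarrow> 'p) \<Rightarrow> ('u \<Rightarrow> 't) \<Rightarrow> bool" where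
  "branching_process N NU lp lt \<longleftrightarrow>
     occurrence_net NU \<and> initial_hom NU N lp lt
     \<and> (\<forall>t1 \<in> trans NU. \<forall>t2 \<in> trans NU.
           pre NU t1 = pre NU t2 \<and> lt t1 = lt t2 \<longrightarrow> t1 = t2)"

text \<open>A Petri game: underlying net N with places PS \<union> PE (system / environment places)
  and bad markings B.\<close>

definition petri_game ::
  "('p, 't) net \<Rightarrow> 'p set \<Rightarrow> 'p set \<Rightarrow> 'p multiset set \<Rightarrow> bool" where
  "petri_game N PS PE B \<longleftrightarrow>
     wf_net N \<and> finite_net N \<and> PS \<inter> PE = {} \<and> places N = PS \<union> PE"

definition purely_env :: "('p, 't) net \<Rightarrow> 'p set \<Rightarrow> 't \<Rightarrow> bool" where
  "purely_env N PE t \<longleftrightarrow> set_mset (pre N t) \<subseteq> PE"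

definition system_trans :: "('p, 't) net \<Rightarrow> 'p set \<Rightarrow> 't \<Rightarrow> bool" where
  "system_trans N PE t \<longleftrightarrow> t \<in> trans N \<and> \<not> purely_env N PE t"

definition one_system_player :: "('p, 't) net \<Rightarrow> 'p set \<Rightarrow> bool" where
  "one_system_player N PS \<longleftrightarrow> (\<forall>M \<in> reach N. size (filter_mset (\<lambda>p. p \<in> PS) M) = 1)"

definition sys_place :: "'p set \<Rightarrow> 'p multiset \<Rightarrow> 'p" where
  "sys_place PS M = (THE p. p \<in> PS \<and> p \<in># M)"

definition sys_post :: "('p, 't) net \<Rightarrow> 'p set \<Rightarrow> 'p multiset \<Rightarrow> 't set" where
  "sys_post N PS M = {t \<in> trans N. sys_place PS M \<in># pre N t}"

definition pairwise_concurrent :: "('q, 'u) net \<Rightarrow> 'q set \<Rightarrow> bool" where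
  "pairwise_concurrent NS S \<longleftrightarrow>
     S \<subseteq> places NS \<and> (\<forall>x \<in> S. \<forall>y \<in> S. x \<noteq> y \<longrightarrow> concurrent NS (Inl x) (Inl y))"

definition winning_da_strategy ::
  "('p, 't) net \<Rightarrow> 'p set \<Rightarrow> 'p set \<Rightarrow> 'p multiset set
   \<Rightarrow> ('q, 'u) net \<Rightarrow> ('q \<Rightarrow> 'p) \<Rightarrow> ('u \<Rightarrow> 't) \<Rightarrow> bool" where
  "winning_da_strategy N PS PE B NS lp lt \<longleftrightarrow>
     branching_process N NS lp lt
     \<and> \<comment> \<open>justified refusal\<close>
       (\<forall>S t. finite S \<and> pairwise_concurrent NS S \<and> t \<in> trans N
           \<and> image_mset lp (mset_set S) = pre N t
           \<and> \<not> (\<exists>u \<in> trans NS. lt u = t \<and> pre NS u = mset_set S)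
           \<longrightarrow> (\<exists>s \<in> S. lp s \<in> PS \<and> t \<notin> lt ` {u \<in> trans NS. s \<in># pre NS u}))
     \<and> \<comment> \<open>safety\<close>
       (\<forall>M \<in> reach NS. image_mset lp M \<notin> B)
     \<and> \<comment> \<open>determinism\<close>
       (\<forall>s \<in> places NS. lp s \<in> PS \<longrightarrow> (\<forall>M \<in> reach NS. s \<in># M \<longrightarrow>
          (\<forall>u1 u2. u1 \<in> trans NS \<and> s \<in># pre NS u1 \<and> enabled NS u1 M
                 \<and> u2 \<in> trans NS \<and> s \<in># pre NS u2 \<and> enabled NS u2 M \<longrightarrow> u1 = u2)))
     \<and> \<comment> \<open>deadlock avoidance\<close>
       (\<forall>M \<in> reach NS. (\<exists>t. enabled N t (image_mset lp M)) \<longrightarrow> (\<exists>u. enabled NS u M))"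

text \<open>Strategies are vertex-labelled trees; since children of a node carry pairwise distinct
  labels, a node is identified with the (nonempty) list of labels from the root to it.\<close>

definition graph_strategy ::
  "'v set \<Rightarrow> 'v set \<Rightarrow> 'v \<Rightarrow> ('v \<times> 'v) set \<Rightarrow> 'v list set \<Rightarrow> bool" where
  "graph_strategy V0 V1 I E Tr \<longleftrightarrow>
     [I] \<in> Tr
     \<and> (\<forall>xs \<in> Tr. xs \<noteq> [] \<and> hd xs = I)
     \<and> (\<forall>xs v. xs \<noteq> [] \<and> xs @ [v] \<in> Tr \<longrightarrow> xs \<in> Tr \<and> (last xs, v) \<in> E)
     \<and> (\<forall>xs \<in> Tr. last xs \<in> V1 \<longrightarrow> (\<forall>w. (last xs, w) \<in> E \<longrightarrow> xs @ [w] \<in> Tr))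
     \<and> (\<forall>xs \<in> Tr. last xs \<in> V0 \<and> (\<exists>w. (last xs, w) \<in> E) \<longrightarrow> (\<exists>!w. xs @ [w] \<in> Tr))"

definition finite_play :: "'v \<Rightarrow> ('v \<times> 'v) set \<Rightarrow> 'v list \<Rightarrow> bool" where
  "finite_play I E xs \<longleftrightarrow> xs \<noteq> [] \<and> hd xs = I
     \<and> (\<forall>i. Suc i < length xs \<longrightarrow> (xs ! i, xs ! Suc i) \<in> E)
     \<and> \<not> (\<exists>w. (last xs, w) \<in> E)"

definition infinite_play :: "'v \<Rightarrow> ('v \<times> 'v) set \<Rightarrow> (nat \<Rightarrow> 'v) \<Rightarrow> bool" where
  "infinite_play I E f \<longleftrightarrow> f 0 = I \<and> (\<forall>i. (f i, f (Suc i)) \<in> E)"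

definition winning_graph_strategy ::
  "'v set \<Rightarrow> 'v set \<Rightarrow> 'v \<Rightarrow> ('v \<times> 'v) set \<Rightarrow> 'v set \<Rightarrow> 'v list set \<Rightarrow> bool" where
  "winning_graph_strategy V0 V1 I E X Tr \<longleftrightarrow>
     graph_strategy V0 V1 I E Tr
     \<and> (\<forall>xs \<in> Tr. \<not> (\<exists>w. xs @ [w] \<in> Tr) \<longrightarrow> finite_play I E xs \<and> set xs \<inter> X = {})
     \<and> (\<forall>f. (\<forall>n. map f [0..<Suc n] \<in> Tr) \<longrightarrow> infinite_play I E f \<and> (\<forall>i. f i \<notin> X))"

text \<open>Vertices are pairs (M, c) where c = None stands for \<top> and c = Some C for a set C
  of transitions.\<close>

type_synonym ('p, 't) gvertex = "'p multiset \<times> 't set option"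

definition gV0 :: "('p, 't) net \<Rightarrow> ('p, 't) gvertex set" where
  "gV0 N = {(M, None) | M. M \<in> reach N}"

definition gV1 :: "('p, 't) net \<Rightarrow> 'p set \<Rightarrow> ('p, 't) gvertex set" where
  "gV1 N PS = {(M, Some c) | M c. M \<in> reach N \<and> c \<subseteq> sys_post N PS M}"

definition gI :: "('p, 't) net \<Rightarrow> ('p, 't) gvertex" where
  "gI N = (init N, None)"

definition gE :: "('p, 't) net \<Rightarrow> 'p set \<Rightarrow> 'p set
                  \<Rightarrow> (('p, 't) gvertex \<times> ('p, 't) gvertex) set" where
  "gE N PS PE =
     {((M, None), (M, Some c)) | M c. M \<in> reach N \<and> c \<subseteq> sys_post N PS M}
   \<union> {((M, Some c), (M', Some c)) | M M' c. (M, Some c) \<in> gV1 N PS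
        \<and> (\<exists>t. purely_env N PE t \<and> enabled N t M \<and> M' = fire N t M)}
   \<union> {((M, Some c), (M', None)) | M M' c. (M, Some c) \<in> gV1 N PS
        \<and> (\<exists>t \<in> c. system_trans N PE t \<and> enabled N t M \<and> M' = fire N t M)}"

definition gX :: "('p, 't) net \<Rightarrow> 'p set \<Rightarrow> 'p set \<Rightarrow> 'p multiset set
                  \<Rightarrow> ('p, 't) gvertex set" where
  "gX N PS PE B =
     {(M, Some c) | M c. (M, Some c) \<in> gV1 N PS \<and>
        (M \<in> B
         \<or> (\<exists>t1 \<in> c. \<exists>t2 \<in> c. t1 \<noteq> t2 \<and> enabled N t1 M \<and> enabled N t2 M)
         \<or> (\<exists>t \<in> c. enabled N t M \<and> (\<exists>p. 0 < count (pre N t) p \<and> count (pre N t) p < count M p))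
         \<or> ((\<exists>t. enabled N t M) \<and> (\<forall>t. enabled N t M \<longrightarrow> system_trans N PE t)
             \<and> \<not> (\<exists>t \<in> c. enabled N t M)))}"

end

theory Submission
  imports Defs
begin


locale occ = fixes NS :: "('q,'u) net" assumes occ: "occurrence_net NS"
begin

definition postC :: "'u set \<Rightarrow> 'q set" where "postC C = (\<Union>u\<in>C. set_mset (post NS u))"
definition preC :: "'u set \<Rightarrow> 'q set" where "preC C = (\<Union>u\<in>C. set_mset (pre NS u))"
definition Cl :: "'u set \<Rightarrow> ('q + 'u) set" where
  "Cl C = Inr ` C \<union> Inl ` (set_mset (init NS) \<union> postC C)"
definition oinv :: "'q multiset \<Rightarrow> 'u set \<Rightarrow> bool" where
  "oinv K C \<longleftrightarrow> (\<forall>p. count K p \<le> 1) \<and> set_mset K = (set_mset (init NS) \<union> postC C) - preC C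
     \<and> C \<subseteq> trans NS \<and> (\<forall>u\<in>C. set_mset (pre NS u) \<subseteq> set_mset (init NS) \<union> postC C)
     \<and> (\<forall>u1\<in>C. \<forall>u2\<in>C. u1 \<noteq> u2 \<longrightarrow> set_mset (pre NS u1) \<inter> set_mset (pre NS u2) = {})"

lemma wfn: "wf_net NS" using occ unfolding occurrence_net_def by blast
lemma cnt1: "t \<in> trans NS \<Longrightarrow> count (pre NS t) p \<le> 1 \<and> count (post NS t) p \<le> 1"
  using occ unfolding occurrence_net_def by blast
lemma post_places: "t \<in> trans NS \<Longrightarrow> p \<in># post NS t \<Longrightarrow> p \<in> places NS"
  using wfn unfolding wf_net_def by blast
lemma pre_places: "t \<in> trans NS \<Longrightarrow> p \<in># pre NS t \<Longrightarrow> p \<in> places NS"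
  using wfn unfolding wf_net_def by blast
lemma pre_ne: "t \<in> trans NS \<Longrightarrow> pre NS t \<noteq> {#}"
  using wfn unfolding wf_net_def by blast
lemma uniq_prod: "u1 \<in> trans NS \<Longrightarrow> u2 \<in> trans NS \<Longrightarrow> p \<in># post NS u1 \<Longrightarrow> p \<in># post NS u2 \<Longrightarrow> u1 = u2"
  using occ post_places unfolding occurrence_net_def by blast
lemma init_noprod: "p \<in># init NS \<Longrightarrow> u \<in> trans NS \<Longrightarrow> p \<notin># post NS u"
proof -
  assume a: "p \<in># init NS" "u \<in> trans NS"
  have "set_mset (init NS) = {p \<in> places NS. \<not> (\<exists>t \<in> trans NS. p \<in># post NS t)}"
    using occ unfolding occurrence_net_def by blast
  with a show ?thesis by blast
qed
lemma init_cnt: "count (init NS) p \<le> 1" using occ unfolding occurrence_net_def by blast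
lemma wff: "wf (flow_rel NS)" using occ unfolding occurrence_net_def by blast

lemma no_loop: "u \<in> trans NS \<Longrightarrow> p \<in># pre NS u \<Longrightarrow> p \<notin># post NS u"
proof
  assume a: "u \<in> trans NS" "p \<in># pre NS u" "p \<in># post NS u"
  hence "(Inl p, Inr u) \<in> flow_rel NS" "(Inr u, Inl p) \<in> flow_rel NS"
    unfolding flow_rel_def by auto
  thus False using wf_asym[OF wff] by blast
qed

lemma Cl_back:
  assumes "oinv K C" "(x, y) \<in> (flow_rel NS)\<^sup>*" "y \<in> Cl C"
  shows "x \<in> Cl C"
  using assms(2,3)
proof (induction rule: converse_rtrancl_induct)
  case base
  then show ?case .
next
  case (step x z)
  from step.hyps(1) consider (a) p u where "x = Inl p" "z = Inr u" "u \<in> trans NS" "p \<in># pre NS u"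
    | (b) p u where "x = Inr u" "z = Inl p" "u \<in> trans NS" "p \<in># post NS u"
    unfolding flow_rel_def by blast
  then show ?case
  proof cases
    case a
    with step.IH[OF step.prems] have "u \<in> C" unfolding Cl_def by auto
    with assms(1) a have "p \<in> set_mset (init NS) \<union> postC C" unfolding oinv_def by blast
    with a show ?thesis unfolding Cl_def by blast
  next
    case b
    with step.IH[OF step.prems] have "p \<in># init NS \<or> p \<in> postC C" unfolding Cl_def by auto
    then show ?thesis
    proof
      assume "p \<in># init NS" with init_noprod b show ?thesis by blast
    next
      assume "p \<in> postC C"
      then obtain u' where "u' \<in> C" "p \<in># post NS u'" unfolding postC_def by blast
      moreover have "u' \<in> trans NS" using assms(1) \<open>u' \<in> C\<close> unfolding oinv_def by blast
      ultimately have "u = u'" using uniq_prod b by blast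
      with \<open>u' \<in> C\<close> b show ?thesis unfolding Cl_def by auto
    qed
  qed
qed

lemma oinv_init: "oinv (init NS) {}"
  unfolding oinv_def postC_def preC_def using init_cnt by auto

lemma oinv_step:
  assumes "oinv K C" "enabled NS u K"
  shows "oinv (fire NS u K) (insert u C)"
proof -
  have u: "u \<in> trans NS" and sub: "pre NS u \<subseteq># K" using assms(2) unfolding enabled_def by auto
  have K1: "\<And>p. count K p \<le> 1" and sK: "set_mset K = (set_mset (init NS) \<union> postC C) - preC C"
    and Ct: "C \<subseteq> trans NS" and clo: "\<forall>u\<in>C. set_mset (pre NS u) \<subseteq> set_mset (init NS) \<union> postC C"
    and cf: "\<forall>u1\<in>C. \<forall>u2\<in>C. u1 \<noteq> u2 \<longrightarrow> set_mset (pre NS u1) \<inter> set_mset (pre NS u2) = {}"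
    using assms(1) unfolding oinv_def by auto
  have preK: "set_mset (pre NS u) \<subseteq> set_mset K" using sub by (simp add: set_mset_mono)
  have uC: "u \<notin> C"
  proof
    assume "u \<in> C"
    obtain p where "p \<in># pre NS u" using pre_ne[OF u] by (meson multiset_nonemptyE)
    hence "p \<in> preC C" "p \<in># K" using \<open>u \<in> C\<close> preK unfolding preC_def by auto
    with sK show False by auto
  qed
  have postnot: "p \<notin> set_mset (init NS) \<union> postC C" if "p \<in># post NS u" for p
  proof
    assume "p \<in> set_mset (init NS) \<union> postC C"
    then show False
    proof
      assume "p \<in># init NS" with init_noprod u that show False by blast
    next
      assume "p \<in> postC C"
      then obtain u' where "u' \<in> C" "p \<in># post NS u'" unfolding postC_def by blast
      with uniq_prod[OF u _ that] Ct uC show False by blast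
    qed
  qed
  have postnotpre: "p \<notin> preC C" if "p \<in># post NS u" for p
  proof
    assume "p \<in> preC C"
    then obtain u' where "u' \<in> C" "p \<in># pre NS u'" unfolding preC_def by blast
    with clo postnot[OF that] show False by blast
  qed
  have cnt: "count (fire NS u K) p = count K p - count (pre NS u) p + count (post NS u) p" for p
    unfolding fire_def by simp
  have c1: "count (fire NS u K) p \<le> 1" for p
  proof (cases "p \<in># post NS u")
    case True
    hence "p \<notin># K" using postnot[OF True] sK by auto
    then show ?thesis using cnt cnt1[OF u] by (simp add: not_in_iff)
  next
    case False
    then show ?thesis using cnt K1[of p] by (simp add: not_in_iff)
  qed
  have sF: "set_mset (fire NS u K) = (set_mset K - set_mset (pre NS u)) \<union> set_mset (post NS u)"
  proof -
    have "p \<in># fire NS u K \<longleftrightarrow> (p \<in># K \<and> p \<notin># pre NS u) \<or> p \<in># post NS u" for p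
    proof -
      have "count (pre NS u) p \<le> count K p" using sub by (simp add: subseteq_mset_def)
      moreover have "count K p \<le> 1" by (rule K1)
      ultimately show ?thesis unfolding count_greater_zero_iff[symmetric] cnt[of p] by presburger
    qed
    thus ?thesis by auto
  qed
  have "set_mset (fire NS u K) = (set_mset (init NS) \<union> postC (insert u C)) - preC (insert u C)"
    unfolding sF sK postC_def preC_def
    using postnotpre no_loop[OF u] postnot by (auto simp: postC_def preC_def)
  moreover have "\<forall>v\<in>insert u C. set_mset (pre NS v) \<subseteq> set_mset (init NS) \<union> postC (insert u C)"
    using clo preK sK by (auto simp: postC_def)
  moreover have "\<forall>u1\<in>insert u C. \<forall>u2\<in>insert u C. u1 \<noteq> u2 \<longrightarrow> set_mset (pre NS u1) \<inter> set_mset (pre NS u2) = {}"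
    using cf preK sK by (auto simp: preC_def)
  ultimately show ?thesis using c1 Ct u unfolding oinv_def by auto
qed

lemma reach_oinv: "K \<in> reach NS \<Longrightarrow> \<exists>C. oinv K C"
proof (induction rule: reach.induct)
  case init then show ?case using oinv_init by blast
next
  case (step M t) then show ?case using oinv_step by blast
qed

lemma reach_set: "K \<in> reach NS \<Longrightarrow> count K p \<le> 1"
  using reach_oinv unfolding oinv_def by blast

lemma reach_places: "K \<in> reach NS \<Longrightarrow> set_mset K \<subseteq> places NS"
proof -
  assume "K \<in> reach NS"
  then obtain C where o: "oinv K C" using reach_oinv by blast
  hence "C \<subseteq> trans NS" unfolding oinv_def by blast
  moreover have "set_mset (init NS) \<subseteq> places NS" using wfn unfolding wf_net_def by blast
  ultimately show ?thesis using o post_places unfolding oinv_def postC_def by blast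
qed

lemma reach_conc:
  assumes "K \<in> reach NS" "p \<in># K" "q \<in># K" "p \<noteq> q"
  shows "concurrent NS (Inl p) (Inl q)"
proof -
  obtain C where o: "oinv K C" using reach_oinv assms(1) by blast
  have sK: "set_mset K = (set_mset (init NS) \<union> postC C) - preC C" using o unfolding oinv_def by blast
  have clp: "Inl p \<in> Cl C" "Inl q \<in> Cl C" using assms(2,3) sK unfolding Cl_def by auto
  have nc: "\<not> causal_le NS (Inl a) (Inl b)" if h: "a \<in># K" "Inl b \<in> Cl C" "a \<noteq> b" for a b
  proof
    assume "causal_le NS (Inl a) (Inl b)"
    hence "(Inl a, Inl b) \<in> (flow_rel NS)\<^sup>*" unfolding causal_le_def .
    then obtain z where z: "(Inl a, z) \<in> flow_rel NS" "(z, Inl b) \<in> (flow_rel NS)\<^sup>*"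
      using h(3) by (metis converse_rtranclE sum.inject(1))
    then obtain u where "z = Inr u" "a \<in># pre NS u" unfolding flow_rel_def by blast
    with Cl_back[OF o z(2) h(2)] have "u \<in> C" "a \<in># pre NS u" unfolding Cl_def by auto
    hence "a \<in> preC C" unfolding preC_def by blast
    with h(1) sK show False by auto
  qed
  have ncf: "\<not> conflict NS (Inl p) (Inl q)"
  proof
    assume "conflict NS (Inl p) (Inl q)"
    then obtain r t1 t2 where "t1 \<noteq> t2" "r \<in># pre NS t1" "r \<in># pre NS t2"
      "causal_le NS (Inr t1) (Inl p)" "causal_le NS (Inr t2) (Inl q)"
      unfolding conflict_def by blast
    moreover have "t1 \<in> C" using Cl_back[OF o _ clp(1)] \<open>causal_le NS (Inr t1) (Inl p)\<close>
      unfolding causal_le_def Cl_def by auto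
    moreover have "t2 \<in> C" using Cl_back[OF o _ clp(2)] \<open>causal_le NS (Inr t2) (Inl q)\<close>
      unfolding causal_le_def Cl_def by auto
    ultimately show False using o unfolding oinv_def by blast
  qed
  show ?thesis unfolding concurrent_def using nc[OF assms(2) clp(2) assms(4)] nc[OF assms(3) clp(1)] assms(4) ncf by auto
qed

end


lemma mset_set_setlike: "(\<And>p. count A p \<le> 1) \<Longrightarrow> mset_set (set_mset A) = A"
proof (rule multiset_eqI)
  fix x assume a: "\<And>p. count A p \<le> 1"
  show "count (mset_set (set_mset A)) x = count A x"
  proof (cases "x \<in># A")
    case True
    hence "count A x \<noteq> 0" using not_in_iff by metis
    with a[of x] have "count A x = 1" by linarith
    with True show ?thesis by (simp add: count_mset_set)
  qed (simp add: count_mset_set not_in_iff)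
qed

lemma lift_sub: "A \<subseteq># image_mset f K \<Longrightarrow> \<exists>Bm. Bm \<subseteq># K \<and> image_mset f Bm = A"
proof -
  assume "A \<subseteq># image_mset f K"
  hence "image_mset f K = A + (image_mset f K - A)" by simp
  from image_mset_eq_plusD[OF this] obtain B' C' where "K = B' + C'" "A = image_mset f B'" by blast
  thus ?thesis by (metis mset_subset_eq_add_left)
qed

locale gm =
  fixes N :: "('p,'t) net" and PS PE :: "'p set" and B :: "'p multiset set"
    and NS :: "('q,'u) net" and lp :: "'q \<Rightarrow> 'p" and lt :: "'u \<Rightarrow> 't"
  assumes pg: "petri_game N PS PE B" and osp: "one_system_player N PS"
    and ws: "winning_da_strategy N PS PE B NS lp lt"
begin

lemma bp: "branching_process N NS lp lt" using ws unfolding winning_da_strategy_def by blast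

sublocale occ NS using bp unfolding branching_process_def by unfold_locales blast

lemma hom: "u \<in> trans NS \<Longrightarrow> lt u \<in> trans N \<and> image_mset lp (pre NS u) = pre N (lt u)
   \<and> image_mset lp (post NS u) = post N (lt u)"
  using bp unfolding branching_process_def initial_hom_def homomorphism_def by blast
lemma hinit: "image_mset lp (init NS) = init N"
  using bp unfolding branching_process_def initial_hom_def by blast

lemma jr: "finite S \<Longrightarrow> pairwise_concurrent NS S \<Longrightarrow> t \<in> trans N
           \<Longrightarrow> image_mset lp (mset_set S) = pre N t
           \<Longrightarrow> \<not> (\<exists>u \<in> trans NS. lt u = t \<and> pre NS u = mset_set S)
           \<Longrightarrow> (\<exists>s \<in> S. lp s \<in> PS \<and> t \<notin> lt ` {u \<in> trans NS. s \<in># pre NS u})"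
  using ws unfolding winning_da_strategy_def by blast
lemma safe: "M \<in> reach NS \<Longrightarrow> image_mset lp M \<notin> B"
  using ws unfolding winning_da_strategy_def by blast
lemma det: "s \<in> places NS \<Longrightarrow> lp s \<in> PS \<Longrightarrow> M \<in> reach NS \<Longrightarrow> s \<in># M \<Longrightarrow>
   u1 \<in> trans NS \<Longrightarrow> s \<in># pre NS u1 \<Longrightarrow> enabled NS u1 M \<Longrightarrow>
   u2 \<in> trans NS \<Longrightarrow> s \<in># pre NS u2 \<Longrightarrow> enabled NS u2 M \<Longrightarrow> u1 = u2"
  using ws unfolding winning_da_strategy_def by blast
lemma da: "M \<in> reach NS \<Longrightarrow> enabled N t (image_mset lp M) \<Longrightarrow> \<exists>u. enabled NS u M"
  using ws unfolding winning_da_strategy_def by blast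

lemma Npre: "t \<in> trans N \<Longrightarrow> set_mset (pre N t) \<subseteq> PS \<union> PE"
  using pg unfolding petri_game_def wf_net_def by blast
lemma disj: "PS \<inter> PE = {}" using pg unfolding petri_game_def by blast

lemma jr_app:
  assumes K: "K \<in> reach NS" and sub: "Bm \<subseteq># K" and t: "t \<in> trans N" and im: "image_mset lp Bm = pre N t"
  shows "(\<exists>u\<in>trans NS. lt u = t \<and> pre NS u = Bm) \<or>
         (\<exists>s. s \<in># Bm \<and> lp s \<in> PS \<and> t \<notin> lt ` {u \<in> trans NS. s \<in># pre NS u})"
proof -
  have c1: "count Bm p \<le> 1" for p
    using reach_set[OF K, of p] sub by (metis order.trans mset_subset_eq_count)
  have eq: "mset_set (set_mset Bm) = Bm" using mset_set_setlike c1 by blast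
  have pc: "pairwise_concurrent NS (set_mset Bm)"
    unfolding pairwise_concurrent_def
    using reach_places[OF K] reach_conc[OF K] sub by (meson mset_subset_eqD subset_iff)
  show ?thesis using jr[of "set_mset Bm" t] eq pc t im by auto
qed

definition sp :: "'q multiset \<Rightarrow> 'q" where "sp K = (THE q. q \<in># K \<and> lp q \<in> PS)"
definition choice :: "'q multiset \<Rightarrow> 't set" where
  "choice K = lt ` {u \<in> trans NS. sp K \<in># pre NS u}"

lemma sysK:
  assumes "image_mset lp K = M" "M \<in> reach N"
  shows "sp K \<in># K \<and> lp (sp K) \<in> PS \<and> (\<forall>q. q \<in># K \<and> lp q \<in> PS \<longrightarrow> q = sp K)
      \<and> sys_place PS M = lp (sp K) \<and> (\<forall>p \<in> PS. count M p \<le> 1)"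
proof -
  have "size (filter_mset (\<lambda>p. p \<in> PS) M) = 1" using osp assms(2) unfolding one_system_player_def by blast
  hence sz: "size (filter_mset (\<lambda>q. lp q \<in> PS) K) = 1"
    using assms(1) filter_mset_image_mset[of "\<lambda>p. p \<in> PS" lp K] by simp
  then obtain s where fs: "filter_mset (\<lambda>q. lp q \<in> PS) K = {#s#}" using size_1_singleton_mset by blast
  have iff: "q \<in># K \<and> lp q \<in> PS \<longleftrightarrow> q = s" for q
  proof -
    have "q \<in># filter_mset (\<lambda>q. lp q \<in> PS) K \<longleftrightarrow> q = s" using fs by simp
    thus ?thesis by simp
  qed
  hence sps: "sp K = s" unfolding sp_def by auto
  have "p \<in> PS \<and> p \<in># M \<longleftrightarrow> p = lp s" for p
    using iff[of s] iff assms(1) by (force simp: image_iff)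
  hence "sys_place PS M = lp s" unfolding sys_place_def by auto
  moreover have "count M p \<le> 1" if "p \<in> PS" for p
  proof -
    have "count (filter_mset (\<lambda>p. p \<in> PS) M) p \<le> size (filter_mset (\<lambda>p. p \<in> PS) M)"
      by (rule count_le_size)
    thus ?thesis using that \<open>size (filter_mset (\<lambda>p. p \<in> PS) M) = 1\<close> by simp
  qed
  ultimately show ?thesis using iff sps by auto
qed

end


context gm begin

definition inv :: "('p,'t) gvertex \<Rightarrow> 'q multiset \<Rightarrow> bool" where
  "inv v K \<longleftrightarrow> K \<in> reach NS \<and> fst v \<in> reach N \<and> image_mset lp K = fst v
     \<and> (\<forall>c. snd v = Some c \<longrightarrow> c = choice K)"

lemma en_img: "enabled NS u K \<Longrightarrow> enabled N (lt u) (image_mset lp K)"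
  using hom unfolding enabled_def by (metis image_mset_subseteq_mono)

lemma fire_img: "enabled NS u K \<Longrightarrow> image_mset lp (fire NS u K) = fire N (lt u) (image_mset lp K)"
proof -
  assume "enabled NS u K"
  hence u: "u \<in> trans NS" "pre NS u \<subseteq># K" unfolding enabled_def by auto
  have "image_mset lp (K - pre NS u) = image_mset lp K - image_mset lp (pre NS u)"
    using u(2) by (rule image_mset_Diff)
  thus ?thesis unfolding fire_def image_mset_union using hom[OF u(1)] by simp
qed

lemma choice_sub:
  assumes "image_mset lp K = M" "M \<in> reach N"
  shows "choice K \<subseteq> sys_post N PS M"
proof
  fix t assume "t \<in> choice K"
  then obtain u where u: "u \<in> trans NS" "sp K \<in># pre NS u" "t = lt u" unfolding choice_def by blast
  hence "lp (sp K) \<in># pre N t" using hom[OF u(1)] by (metis image_eqI set_image_mset)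
  thus "t \<in> sys_post N PS M" using sysK[OF assms] hom[OF u(1)] u(3) unfolding sys_post_def by auto
qed

lemma inc:
  assumes K: "K \<in> reach NS" and M: "image_mset lp K = M" "M \<in> reach N"
    and tc: "t \<in> choice K" and sub: "Bm \<subseteq># K" and im: "image_mset lp Bm = pre N t"
  shows "\<exists>u\<in>trans NS. lt u = t \<and> pre NS u = Bm \<and> sp K \<in># Bm"
proof -
  note S = sysK[OF M]
  obtain u0 where u0: "u0 \<in> trans NS" "sp K \<in># pre NS u0" "t = lt u0" using tc unfolding choice_def by blast
  have t: "t \<in> trans N" using hom[OF u0(1)] u0(3) by simp
  have "lp (sp K) \<in># pre N t" using hom[OF u0(1)] u0 by (metis image_eqI set_image_mset)
  then obtain q where q: "q \<in># Bm" "lp q = lp (sp K)" using im by (metis imageE set_image_mset)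
  have "q \<in># K" using q(1) sub by (meson mset_subset_eqD)
  hence spB: "sp K \<in># Bm" using S q by metis
  from jr_app[OF K sub t im] show ?thesis
  proof
    assume "\<exists>s. s \<in># Bm \<and> lp s \<in> PS \<and> t \<notin> lt ` {u \<in> trans NS. s \<in># pre NS u}"
    then obtain s where s: "s \<in># Bm" "lp s \<in> PS" "t \<notin> lt ` {u \<in> trans NS. s \<in># pre NS u}" by blast
    have "s \<in># K" using s(1) sub by (meson mset_subset_eqD)
    hence "s = sp K" using S s(2) by blast
    with s(3) u0 show ?thesis by blast
  qed (use spB in blast)
qed

lemma notX:
  assumes "inv v K" shows "v \<notin> gX N PS PE B"
proof
  assume "v \<in> gX N PS PE B"
  then obtain M c where v: "v = (M, Some c)" and x: "M \<in> B
         \<or> (\<exists>t1 \<in> c. \<exists>t2 \<in> c. t1 \<noteq> t2 \<and> enabled N t1 M \<and> enabled N t2 M)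
         \<or> (\<exists>t \<in> c. enabled N t M \<and> (\<exists>p. 0 < count (pre N t) p \<and> count (pre N t) p < count M p))
         \<or> ((\<exists>t. enabled N t M) \<and> (\<forall>t. enabled N t M \<longrightarrow> system_trans N PE t)
             \<and> \<not> (\<exists>t \<in> c. enabled N t M))" unfolding gX_def by blast
  have K: "K \<in> reach NS" and M: "image_mset lp K = M" "M \<in> reach N" and c: "c = choice K"
    using assms v unfolding inv_def by auto
  note S = sysK[OF M]
  define s where "s = sp K"
  have sK: "s \<in># K" and sPS: "lp s \<in> PS" and suniq: "\<And>q. q \<in># K \<Longrightarrow> lp q \<in> PS \<Longrightarrow> q = s"
    using S unfolding s_def by auto
  have splaces: "s \<in> places NS" using reach_places[OF K] sK by blast
  have getu: "\<exists>u\<in>trans NS. lt u = t \<and> pre NS u = Bm \<and> s \<in># Bm \<and> enabled NS u K"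
    if h: "t \<in> c" "Bm \<subseteq># K" "image_mset lp Bm = pre N t" for t Bm
  proof -
    obtain u where "u\<in>trans NS" "lt u = t" "pre NS u = Bm" "sp K \<in># Bm"
      using inc[OF K M _ h(2,3)] h(1) c by blast
    thus ?thesis using h(2) unfolding s_def enabled_def by blast
  qed
  have lift: "\<exists>Bm. Bm \<subseteq># K \<and> image_mset lp Bm = pre N t" if "enabled N t M" for t
    using lift_sub that M(1) unfolding enabled_def by blast
  from x show False
  proof (elim disjE)
    assume "M \<in> B" with safe[OF K] M show False by simp
  next
    assume "\<exists>t1 \<in> c. \<exists>t2 \<in> c. t1 \<noteq> t2 \<and> enabled N t1 M \<and> enabled N t2 M"
    then obtain t1 t2 where t: "t1 \<in> c" "t2 \<in> c" "t1 \<noteq> t2" "enabled N t1 M" "enabled N t2 M" by blast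
    obtain B1 where b1: "B1 \<subseteq># K" "image_mset lp B1 = pre N t1" using lift t(4) by blast
    obtain B2 where b2: "B2 \<subseteq># K" "image_mset lp B2 = pre N t2" using lift t(5) by blast
    obtain u1 where U1: "u1 \<in> trans NS" "lt u1 = t1" "pre NS u1 = B1" "s \<in># B1" "enabled NS u1 K"
      using getu[OF t(1) b1] by blast
    obtain u2 where U2: "u2 \<in> trans NS" "lt u2 = t2" "pre NS u2 = B2" "s \<in># B2" "enabled NS u2 K"
      using getu[OF t(2) b2] by blast
    have "u1 = u2" using det[OF splaces sPS K sK U1(1) _ U1(5) U2(1) _ U2(5)] U1(3,4) U2(3,4) by blast
    thus False using U1(2) U2(2) t(3) by blast
  next
    assume "\<exists>t \<in> c. enabled N t M \<and> (\<exists>p. 0 < count (pre N t) p \<and> count (pre N t) p < count M p)"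
    then obtain t p where t: "t \<in> c" "enabled N t M" "0 < count (pre N t) p" "count (pre N t) p < count M p"
      by blast
    obtain Bm where Bm: "Bm \<subseteq># K" "image_mset lp Bm = pre N t" using lift t by blast
    obtain u where u: "u \<in> trans NS" "lt u = t" "pre NS u = Bm" "s \<in># Bm" "enabled NS u K"
      using getu[OF t(1) Bm] by blast
    have "p \<in># image_mset lp Bm" using Bm(2) t(3) by simp
    then obtain q where q: "q \<in># Bm" "lp q = p" by auto
    have "count (image_mset lp (K - Bm)) p > 0"
      using t(4) Bm M(1) by (simp add: image_mset_Diff)
    hence "p \<in># image_mset lp (K - Bm)" by simp
    then obtain q' where q': "q' \<in># K - Bm" "lp q' = p" by auto
    have cK: "count K q' \<le> 1" using reach_set[OF K] by blast
    have "count Bm q' < count K q'" using q'(1) by (simp add: in_diff_count)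
    hence "count Bm q' = 0" using cK by simp
    define Bm' where "Bm' = add_mset q' (Bm - {#q#})"
    have "add_mset q' Bm \<subseteq># K"
    proof -
      have "{#q'#} \<subseteq># K - Bm" using q'(1) by simp
      hence "Bm + {#q'#} \<subseteq># Bm + (K - Bm)" by (rule subset_mset.add_left_mono)
      thus ?thesis using Bm(1) by simp
    qed
    moreover have "Bm' \<subseteq># add_mset q' Bm" unfolding Bm'_def by simp
    ultimately have B'sub: "Bm' \<subseteq># K" by (meson subset_mset.order_trans)
    have pB: "p \<in># image_mset lp Bm" using q by force
    have "image_mset lp Bm' = image_mset lp Bm" unfolding Bm'_def using q q' pB by (simp add: image_mset_Diff insert_DiffM)
    with Bm(2) have B'im: "image_mset lp Bm' = pre N t" by simp
    obtain u' where u': "u' \<in> trans NS" "lt u' = t" "pre NS u' = Bm'" "s \<in># Bm'" "enabled NS u' K"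
      using getu[OF t(1) B'sub B'im] by blast
    have "u = u'" using det[OF splaces sPS K sK u(1) _ u(5) u'(1) _ u'(5)] u u' by blast
    moreover have "q' \<in># Bm'" unfolding Bm'_def by simp
    moreover have "q' \<notin># Bm" using \<open>count Bm q' = 0\<close> by (simp add: not_in_iff)
    ultimately show False using u u' by simp
  next
    assume a: "(\<exists>t. enabled N t M) \<and> (\<forall>t. enabled N t M \<longrightarrow> system_trans N PE t)
             \<and> \<not> (\<exists>t \<in> c. enabled N t M)"
    then obtain u where u: "enabled NS u K" using da[OF K] M(1) by blast
    have en: "enabled N (lt u) M" using en_img[OF u] M(1) by simp
    hence st: "system_trans N PE (lt u)" using a by blast
    have ut: "u \<in> trans NS" "pre NS u \<subseteq># K" using u unfolding enabled_def by auto
    obtain p where p: "p \<in># pre N (lt u)" "p \<notin> PE" using st unfolding system_trans_def purely_env_def by blast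
    have "p \<in> PS" using Npre[of "lt u"] hom[OF ut(1)] p by blast
    obtain q where q: "q \<in># pre NS u" "lp q = p" using p(1) hom[OF ut(1)] by (metis imageE set_image_mset)
    have "q \<in># K" using q(1) ut(2) by (meson mset_subset_eqD)
    hence "q = s" using suniq q \<open>p \<in> PS\<close> by blast
    hence "lt u \<in> c" using c q ut(1) unfolding choice_def s_def by blast
    with en a show False by blast
  qed
qed

end


context gm begin

definition ch :: "'p multiset \<Rightarrow> 't set" where
  "ch M = choice (SOME K. K \<in> reach NS \<and> image_mset lp K = M)"

definition okstep :: "('p,'t) gvertex \<Rightarrow> ('p,'t) gvertex \<Rightarrow> bool" where
  "okstep v w \<longleftrightarrow> (v, w) \<in> gE N PS PE \<and> (\<forall>M. v = (M, None) \<longrightarrow> w = (M, Some (ch M)))"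

lemma ch_inv:
  assumes "inv (M, x) K"
  shows "inv (M, Some (ch M)) (SOME K. K \<in> reach NS \<and> image_mset lp K = M)"
proof -
  have "\<exists>K. K \<in> reach NS \<and> image_mset lp K = M" using assms unfolding inv_def by auto
  from someI_ex[OF this] show ?thesis using assms unfolding inv_def ch_def by auto
qed

lemma ch_edge:
  assumes "inv (M, None) K"
  shows "((M, None), (M, Some (ch M))) \<in> gE N PS PE"
proof -
  have i: "inv (M, Some (ch M)) (SOME K. K \<in> reach NS \<and> image_mset lp K = M)" by (rule ch_inv[OF assms])
  hence "ch M \<subseteq> sys_post N PS M" using choice_sub[of "SOME K. K \<in> reach NS \<and> image_mset lp K = M" M]
    unfolding inv_def ch_def by auto
  moreover have "M \<in> reach N" using assms unfolding inv_def by auto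
  ultimately show ?thesis unfolding gE_def by blast
qed

lemma step_inv:
  assumes "inv v K" "okstep v w"
  shows "\<exists>K'. inv w K'"
proof -
  have K: "K \<in> reach NS" and M0: "image_mset lp K = fst v" "fst v \<in> reach N"
    and cK: "\<And>c. snd v = Some c \<Longrightarrow> c = choice K" using assms(1) unfolding inv_def by auto
  have e: "(v, w) \<in> gE N PS PE" using assms(2) unfolding okstep_def by blast
  then consider (a) M c where "v = (M, None)" "w = (M, Some c)"
    | (b) M M' c t where "v = (M, Some c)" "w = (M', Some c)" "purely_env N PE t" "enabled N t M" "M' = fire N t M"
    | (c) M M' c t where "v = (M, Some c)" "w = (M', None)" "t \<in> c" "system_trans N PE t" "enabled N t M" "M' = fire N t M"
    unfolding gE_def by blast
  then show ?thesis
  proof cases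
    case a
    then show ?thesis using ch_inv[of M None K] assms by (auto simp: okstep_def)
  next
    case b
    have M: "image_mset lp K = M" "M \<in> reach N" using M0 b by auto
    have c: "c = choice K" using cK b by auto
    note S = sysK[OF M]
    have t: "t \<in> trans N" "pre N t \<subseteq># M" using b unfolding enabled_def by auto
    obtain Bm where Bm: "Bm \<subseteq># K" "image_mset lp Bm = pre N t" using lift_sub t(2) M(1) by metis
    have noPS: "lp q \<notin> PS" if "q \<in># Bm" for q
    proof -
      have "lp q \<in># pre N t" using that Bm(2) by (metis image_eqI set_image_mset)
      hence "lp q \<in> PE" using b unfolding purely_env_def by blast
      thus ?thesis using disj by blast
    qed
    obtain u where u: "u \<in> trans NS" "lt u = t" "pre NS u = Bm"
      using jr_app[OF K Bm(1) t(1) Bm(2)] noPS by blast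
    have en: "enabled NS u K" using u Bm unfolding enabled_def by simp
    define K' where "K' = fire NS u K"
    have K': "K' \<in> reach NS" unfolding K'_def using reach.step[OF K en] .
    have M': "image_mset lp K' = M'" unfolding K'_def using fire_img[OF en] M b u by simp
    have M'r: "M' \<in> reach N" using reach.step[OF M(2) b(4)] b(5) by simp
    note S' = sysK[OF M' M'r]
    have "sp K \<notin># Bm" using noPS S by blast
    hence "sp K \<in># K'" unfolding K'_def fire_def using S u(3) by (simp add: in_diff_count not_in_iff)
    hence "sp K' = sp K" using S S' by metis
    hence "c = choice K'" using c unfolding choice_def by simp
    thus ?thesis using K' M' M'r b unfolding inv_def by auto
  next
    case c
    have M: "image_mset lp K = M" "M \<in> reach N" using M0 c by auto
    have cc: "t \<in> choice K" using cK c by auto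
    have t: "t \<in> trans N" "pre N t \<subseteq># M" using c unfolding enabled_def by auto
    obtain Bm where Bm: "Bm \<subseteq># K" "image_mset lp Bm = pre N t" using lift_sub t(2) M(1) by metis
    obtain u where u: "u \<in> trans NS" "lt u = t" "pre NS u = Bm"
      using inc[OF K M cc Bm] by blast
    have en: "enabled NS u K" using u Bm unfolding enabled_def by simp
    define K' where "K' = fire NS u K"
    have K': "K' \<in> reach NS" unfolding K'_def using reach.step[OF K en] .
    have M': "image_mset lp K' = M'" unfolding K'_def using fire_img[OF en] M c u by simp
    have M'r: "M' \<in> reach N" using reach.step[OF M(2) c(5)] c(6) by simp
    show ?thesis using K' M' M'r c unfolding inv_def by auto
  qed
qed

definition Tr :: "('p,'t) gvertex list set" where
  "Tr = {xs. xs \<noteq> [] \<and> hd xs = gI N \<and> (\<forall>i. Suc i < length xs \<longrightarrow> okstep (xs ! i) (xs ! Suc i))}"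

lemma inv_I: "inv (gI N) (init NS)"
  unfolding inv_def gI_def using hinit reach.init[of N] reach.init[of NS] by auto

lemma Tr_inv: "xs \<in> Tr \<Longrightarrow> i < length xs \<Longrightarrow> \<exists>K. inv (xs ! i) K"
proof (induction i)
  case 0
  hence "xs ! 0 = gI N" unfolding Tr_def by (auto simp: hd_conv_nth)
  then show ?case using inv_I by auto
next
  case (Suc i)
  then obtain K where "inv (xs ! i) K" by auto
  moreover have "okstep (xs ! i) (xs ! Suc i)" using Suc.prems unfolding Tr_def by blast
  ultimately show ?case using step_inv by blast
qed

lemma Tr_last: "xs \<in> Tr \<Longrightarrow> \<exists>K. inv (last xs) K"
  using Tr_inv[of xs "length xs - 1"] unfolding Tr_def by (auto simp: last_conv_nth)

lemma Tr_snoc: "xs \<noteq> [] \<Longrightarrow> xs @ [w] \<in> Tr \<longleftrightarrow> xs \<in> Tr \<and> okstep (last xs) w"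
proof -
  assume ne: "xs \<noteq> []"
  have "(\<forall>i. Suc i < length (xs @ [w]) \<longrightarrow> okstep ((xs @ [w]) ! i) ((xs @ [w]) ! Suc i)) \<longleftrightarrow>
        (\<forall>i. Suc i < length xs \<longrightarrow> okstep (xs ! i) (xs ! Suc i)) \<and> okstep (last xs) w"
  proof safe
    fix i assume a: "\<forall>i. Suc i < length (xs @ [w]) \<longrightarrow> okstep ((xs @ [w]) ! i) ((xs @ [w]) ! Suc i)"
      "Suc i < length xs"
    then show "okstep (xs ! i) (xs ! Suc i)" using a(1)[rule_format, of i] by (simp add: nth_append)
  next
    assume a: "\<forall>i. Suc i < length (xs @ [w]) \<longrightarrow> okstep ((xs @ [w]) ! i) ((xs @ [w]) ! Suc i)"
    show "okstep (last xs) w" using a[rule_format, of "length xs - 1"] ne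
      by (simp add: nth_append last_conv_nth)
  next
    fix i assume a: "\<forall>i. Suc i < length xs \<longrightarrow> okstep (xs ! i) (xs ! Suc i)" "okstep (last xs) w"
      "Suc i < length (xs @ [w])"
    show "okstep ((xs @ [w]) ! i) ((xs @ [w]) ! Suc i)"
    proof (cases "Suc i < length xs")
      case True then show ?thesis using a(1) by (simp add: nth_append)
    next
      case False
      hence "i = length xs - 1" "Suc i = length xs" using a(3) by auto
      then show ?thesis using a(2) ne by (simp add: nth_append last_conv_nth)
    qed
  qed
  moreover have "hd (xs @ [w]) = hd xs" using ne by simp
  ultimately show ?thesis unfolding Tr_def using ne by auto
qed

lemma win: "winning_graph_strategy (gV0 N) (gV1 N PS) (gI N) (gE N PS PE) (gX N PS PE B) Tr"
proof -
  have g1: "[gI N] \<in> Tr" unfolding Tr_def by simp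
  have g2: "\<forall>xs \<in> Tr. xs \<noteq> [] \<and> hd xs = gI N" unfolding Tr_def by blast
  have g3: "\<forall>xs v. xs \<noteq> [] \<and> xs @ [v] \<in> Tr \<longrightarrow> xs \<in> Tr \<and> (last xs, v) \<in> gE N PS PE"
    using Tr_snoc unfolding okstep_def by blast
  have g4: "\<forall>xs \<in> Tr. last xs \<in> gV1 N PS \<longrightarrow> (\<forall>w. (last xs, w) \<in> gE N PS PE \<longrightarrow> xs @ [w] \<in> Tr)"
  proof (intro ballI allI impI)
    fix xs w assume a: "xs \<in> Tr" "last xs \<in> gV1 N PS" "(last xs, w) \<in> gE N PS PE"
    have "xs \<noteq> []" using a(1) unfolding Tr_def by blast
    moreover have "okstep (last xs) w" using a(2,3) unfolding okstep_def gV1_def by auto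
    ultimately show "xs @ [w] \<in> Tr" using Tr_snoc a(1) by blast
  qed
  have g5: "\<forall>xs \<in> Tr. last xs \<in> gV0 N \<and> (\<exists>w. (last xs, w) \<in> gE N PS PE) \<longrightarrow> (\<exists>!w. xs @ [w] \<in> Tr)"
  proof (intro ballI impI)
    fix xs assume a: "xs \<in> Tr" "last xs \<in> gV0 N \<and> (\<exists>w. (last xs, w) \<in> gE N PS PE)"
    have ne: "xs \<noteq> []" using a(1) unfolding Tr_def by blast
    obtain M where lx: "last xs = (M, None)" using a(2) unfolding gV0_def by blast
    obtain K where "inv (last xs) K" using Tr_last[OF a(1)] by blast
    hence e: "((M, None), (M, Some (ch M))) \<in> gE N PS PE" using ch_edge lx by simp
    have ok: "okstep (M, None) w \<longleftrightarrow> w = (M, Some (ch M))" for w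
      unfolding okstep_def using e by blast
    have "xs @ [w] \<in> Tr \<longleftrightarrow> w = (M, Some (ch M))" for w
      using Tr_snoc[OF ne, of w] a(1) lx ok by simp
    thus "\<exists>!w. xs @ [w] \<in> Tr" by simp
  qed
  have gs: "graph_strategy (gV0 N) (gV1 N PS) (gI N) (gE N PS PE) Tr"
    unfolding graph_strategy_def using g1 g2 g3 g4 g5 by blast
  have ext: "\<exists>w. xs @ [w] \<in> Tr" if a: "xs \<in> Tr" "(last xs, w0) \<in> gE N PS PE" for xs w0
  proof -
    have ne: "xs \<noteq> []" using a(1) unfolding Tr_def by blast
    obtain K where iK: "inv (last xs) K" using Tr_last[OF a(1)] by blast
    show ?thesis
    proof (cases "snd (last xs)")
      case None
      then obtain M where lx: "last xs = (M, None)" by (metis prod.collapse)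
      hence "okstep (last xs) (M, Some (ch M))" using ch_edge iK unfolding okstep_def by simp
      thus ?thesis using Tr_snoc[OF ne] a(1) by blast
    next
      case (Some c)
      hence "okstep (last xs) w0" using a(2) unfolding okstep_def by auto
      thus ?thesis using Tr_snoc[OF ne] a(1) by blast
    qed
  qed
  have leaf: "finite_play (gI N) (gE N PS PE) xs \<and> set xs \<inter> gX N PS PE B = {}"
    if a: "xs \<in> Tr" "\<not> (\<exists>w. xs @ [w] \<in> Tr)" for xs
  proof -
    have "\<not> (\<exists>w. (last xs, w) \<in> gE N PS PE)" using ext a by blast
    moreover have "\<forall>i. Suc i < length xs \<longrightarrow> (xs ! i, xs ! Suc i) \<in> gE N PS PE"
      using a(1) unfolding Tr_def okstep_def by blast
    moreover have "set xs \<inter> gX N PS PE B = {}"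
    proof -
      have "x \<notin> gX N PS PE B" if "x \<in> set xs" for x
        using that Tr_inv[OF a(1)] notX by (metis in_set_conv_nth)
      thus ?thesis by blast
    qed
    ultimately show ?thesis using a(1) unfolding finite_play_def Tr_def by blast
  qed
  have inf: "infinite_play (gI N) (gE N PS PE) f \<and> (\<forall>i. f i \<notin> gX N PS PE B)"
    if a: "\<forall>n. map f [0..<Suc n] \<in> Tr" for f
  proof -
    have "f 0 = gI N" using a[rule_format, of 0] unfolding Tr_def by simp
    moreover have "(f i, f (Suc i)) \<in> gE N PS PE" for i
    proof -
      have "\<forall>j. Suc j < length (map f [0..<Suc (Suc i)]) \<longrightarrow>
           okstep (map f [0..<Suc (Suc i)] ! j) (map f [0..<Suc (Suc i)] ! Suc j)"
        using a[rule_format, of "Suc i"] unfolding Tr_def by blast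
      from this[rule_format, of i] have "okstep (f i) (f (Suc i))" by (simp del: upt_Suc)
      thus ?thesis unfolding okstep_def by blast
    qed
    moreover have "f i \<notin> gX N PS PE B" for i
    proof -
      obtain K where "inv (map f [0..<Suc i] ! i) K" using Tr_inv[OF a[rule_format, of i], of i] by auto
      thus ?thesis using notX by (simp del: upt_Suc)
    qed
    ultimately show ?thesis unfolding infinite_play_def by blast
  qed
  show ?thesis unfolding winning_graph_strategy_def using gs leaf inf by blast
qed

end

theorem theorem1:
  fixes N :: "('p, 't) net" and PS PE :: "'p set" and B :: "'p multiset set"
    and NS :: "('q, 'u) net" and lp :: "'q \<Rightarrow> 'p" and lt :: "'u \<Rightarrow> 't"
  assumes "petri_game N PS PE B"
    and "one_system_player N PS"
    and "bounded_net N"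
    and "winning_da_strategy N PS PE B NS lp lt"
  shows "\<exists>Tr. winning_graph_strategy (gV0 N) (gV1 N PS) (gI N) (gE N PS PE) (gX N PS PE B) Tr"
proof -
  interpret gm N PS PE B NS lp lt using assms by unfold_locales
  show ?thesis using win by blast
qed

end
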